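(* Let $U$ be a reflexive separable Banach space, let $\xi\sim\mathcal N(0,\Sigma)$ be a centered $m$-dimensional Gaussian random vector with covariance matrix $\Sigma$, and let $g\colon U\times\mathbb R^m\to\mathbb R$ be locally Lipschitzian and jointly convex in both variables $(u,z)$. Let $\bar u\in U$ satisfy $g(\bar u,0)<0$ and assume that the set $M:=\{z\in\mathbb R^m\mid g(\bar u,z)\le 0\}$ is bounded. Let $\mathcal N(\bar u)$ be an open neighborhood of $\bar u$ such that $g(u,0)<0$ for all $u\in\mathcal N(\bar u)$. Then for each $v\in\mathbb S^{m-1}$ the function $u\mapsto -e(u,v)$ is Clarke regular on $\mathcal N(\bar u)$, where $e$ is the radial probability function defined below.
   Context: $\Sigma^{1/2}$ denotes a root of $\Sigma$. The radial probability function $e\colon U\times\mathbb S^{m-1}\to\mathbb R$ is $e(u,v):=\mu_\eta\{r\ge 0\mid g(u,r\Sigma^{1/2}v)\le 0\}$, where $\mu_\eta$ is the one-dimensional chi distribution with $m$ degrees of freedom and $\mathbb S^{m-1}$ is the unit sphere in $\mathbb R^m$. A locally Lipschitzian function is Clarke regular at a point if for every direction its ordinary directional derivative exists there and coincides with its Clarke generalized directional derivative; it is Clarke regular on a set if it is so at each point of the set. *)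

theory Defs
  imports "HOL-Analysis.Analysis" "HOL-Probability.Probability"
begin

definition reflexive_space :: "'u::real_normed_vector itself \<Rightarrow> bool" where
  "reflexive_space _ \<longleftrightarrow>
     (\<forall>\<phi> :: ('u \<Rightarrow>\<^sub>L real) \<Rightarrow>\<^sub>L real. \<exists>u::'u. \<forall>f. blinfun_apply \<phi> f = blinfun_apply f u)"

definition separable_type :: "'u::metric_space itself \<Rightarrow> bool" where
  "separable_type _ \<longleftrightarrow> separable_space (euclidean :: 'u topology)"

definition locally_lipschitz_on :: "'a::metric_space set \<Rightarrow> ('a \<Rightarrow> 'b::metric_space) \<Rightarrow> bool" where
  "locally_lipschitz_on S f \<longleftrightarrow> (\<forall>x\<in>S. \<exists>e>0. \<exists>L. L-lipschitz_on (ball x e) f)"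

definition covariance_matrix :: "real^'m^'m \<Rightarrow> bool" where
  "covariance_matrix S \<longleftrightarrow> transpose S = S \<and> (\<forall>x. 0 \<le> x \<bullet> (S *v x))"

definition chi_density :: "nat \<Rightarrow> real \<Rightarrow> real" where
  "chi_density k r = (if r \<ge> 0 then r ^ (k - 1) * exp (- (r\<^sup>2) / 2)
       / (2 powr (real k / 2 - 1) * Gamma (real k / 2)) else 0)"

definition chi_distribution :: "nat \<Rightarrow> real measure" where
  "chi_distribution k = density lborel (\<lambda>r. ennreal (chi_density k r))"

text \<open>Radial probability function e(u,v) = mu_eta{r>=0 | g(u, r Sigma^(1/2) v) <= 0}.\<close>
definition radial_prob ::
  "('u \<Rightarrow> real^'m \<Rightarrow> real) \<Rightarrow> real^'m^'m \<Rightarrow> 'u \<Rightarrow> real^'m \<Rightarrow> real" where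
  "radial_prob g R u v =
     measure (chi_distribution CARD('m)) {r. r \<ge> 0 \<and> g u (r *\<^sub>R (R *v v)) \<le> 0}"

definition has_dir_deriv :: "('u::real_normed_vector \<Rightarrow> real) \<Rightarrow> 'u \<Rightarrow> 'u \<Rightarrow> real \<Rightarrow> bool" where
  "has_dir_deriv f x d D \<longleftrightarrow> ((\<lambda>t. (f (x + t *\<^sub>R d) - f x) / t) \<longlongrightarrow> D) (at_right 0)"

definition clarke_dir_deriv :: "('u::real_normed_vector \<Rightarrow> real) \<Rightarrow> 'u \<Rightarrow> 'u \<Rightarrow> ereal" where
  "clarke_dir_deriv f x d =
     Limsup (at (x, 0) within (UNIV \<times> {0<..}))
            (\<lambda>(y, t). ereal ((f (y + t *\<^sub>R d) - f y) / t))"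

definition clarke_regular_at :: "('u::real_normed_vector \<Rightarrow> real) \<Rightarrow> 'u \<Rightarrow> bool" where
  "clarke_regular_at f x \<longleftrightarrow>
     locally_lipschitz_on {x} f \<and>
     (\<forall>d. \<exists>D. has_dir_deriv f x d D \<and> clarke_dir_deriv f x d = ereal D)"

definition clarke_regular_on :: "'u::real_normed_vector set \<Rightarrow> ('u \<Rightarrow> real) \<Rightarrow> bool" where
  "clarke_regular_on S f \<longleftrightarrow> (\<forall>x\<in>S. clarke_regular_at f x)"

end

theory Submission
  imports Defs
begin


lemma Limsup_filter_mono:
  assumes "F \<le> G"
  shows "Limsup F f \<le> Limsup G (f :: _ \<Rightarrow> ereal)"
  unfolding Limsup_def
  by (rule INF_superset_mono) (use assms in \<open>auto simp: le_filter_def\<close>)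

lemma clarke_lower:
  fixes Q :: "'u::real_normed_vector \<Rightarrow> real \<Rightarrow> real"
  assumes "((\<lambda>t. Q x t) \<longlongrightarrow> D) (at_right 0)"
  shows "ereal D \<le> Limsup (at (x,0) within UNIV \<times> {0<..}) (\<lambda>(y, t). ereal (Q y t))"
proof -
  have fl: "filterlim (\<lambda>t. (x,t)) (at (x,0) within UNIV \<times> {0<..}) (at_right (0::real))"
  proof (rule filterlim_at_withinI)
    show "filterlim (\<lambda>t. (x,t)) (nhds (x,0)) (at_right (0::real))"
      by (intro tendsto_intros)
    show "\<forall>\<^sub>F t in at_right 0. (x, t) \<in> UNIV \<times> {0<..} - {(x, 0)}"
      using eventually_at_right_less[of "0::real"] by (simp add: eventually_at_filter) 
  qed
  have eq: "Limsup (at_right 0) (\<lambda>t. ereal (Q x t)) = ereal D"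
  proof (rule lim_imp_Limsup)
    show "\<not> trivial_limit (at_right (0::real))" by simp
    show "((\<lambda>t. ereal (Q x t)) \<longlongrightarrow> ereal D) (at_right 0)"
      using assms by (rule tendsto_ereal)
  qed
  have "ereal D = Limsup (at_right 0) (\<lambda>t. (\<lambda>(y, t). ereal (Q y t)) (x,t))" using eq by simp
  also have "\<dots> \<le> Limsup (filtermap (\<lambda>t. (x,t)) (at_right 0)) (\<lambda>(y, t). ereal (Q y t))"
    by (rule Limsup_filtermap_ge)
  also have "\<dots> \<le> Limsup (at (x,0) within UNIV \<times> {0<..}) (\<lambda>(y, t). ereal (Q y t))"
    by (rule Limsup_filter_mono) (use fl in \<open>simp add: filterlim_def\<close>)
  finally show ?thesis .
qed

lemma clarke_upper:
  fixes Q :: "'u::real_normed_vector \<Rightarrow> real \<Rightarrow> real"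
  assumes "\<And>e. e > 0 \<Longrightarrow> \<exists>r>0. \<forall>y t. norm (y - x) < r \<longrightarrow> 0 < t \<longrightarrow> t < r \<longrightarrow> Q y t \<le> D + e"
  shows "Limsup (at (x,0) within UNIV \<times> {0<..}) (\<lambda>(y, t). ereal (Q y t)) \<le> ereal D"
proof (rule ereal_le_epsilon2)
  fix e :: real assume e: "e > 0"
  obtain r where r: "r > 0" "\<forall>y t. norm (y - x) < r \<longrightarrow> 0 < t \<longrightarrow> t < r \<longrightarrow> Q y t \<le> D + e"
    using assms[OF e] by blast
  have "eventually (\<lambda>p. (\<lambda>(y, t). ereal (Q y t)) p \<le> ereal (D + e)) (at (x,0) within UNIV \<times> {0<..})"
    unfolding eventually_at
  proof (intro exI[of _ r] conjI ballI impI)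
    fix p :: "'u \<times> real" assume p: "p \<in> UNIV \<times> {0<..}" "p \<noteq> (x,0) \<and> dist p (x,0) < r"
    obtain y t where [simp]: "p = (y,t)" by (cases p)
    have "dist y x < r" using p dist_fst_le[of p "(x,0)"] by simp
    moreover have "dist t 0 < r" using p dist_snd_le[of p "(x,0)"] by simp
    ultimately show "(\<lambda>(y, t). ereal (Q y t)) p \<le> ereal (D + e)"
      using p r by (auto simp: dist_norm)
  qed (use r in auto)
  then show "Limsup (at (x,0) within UNIV \<times> {0<..}) (\<lambda>(y, t). ereal (Q y t)) \<le> ereal D + ereal e"
    using Limsup_bounded by fastforce
qed


lemma convex_half_lower:
  fixes h :: "'u::real_normed_vector \<Rightarrow> real"
  assumes "convex_on (ball x r) h" "\<forall>y\<in>ball x r. h y \<le> M" "y \<in> ball x r"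
  shows "2 * h x - M \<le> h y"
proof -
  have e: "x - (2 *\<^sub>R x - y) = -(x - y)" by (simp add: algebra_simps scaleR_2)
  have "norm (x - (2 *\<^sub>R x - y)) = norm (x - y)" unfolding e by (rule norm_minus_cancel)
  then have y2: "2 *\<^sub>R x - y \<in> ball x r" using assms(3)
    by (simp add: dist_norm)
  have "x = (1 - 1/2) *\<^sub>R y + (1/2) *\<^sub>R (2 *\<^sub>R x - y)"
    by (simp add: algebra_simps scaleR_2) (simp flip: scaleR_add_left)
  then have "h x \<le> (1 - 1/2) * h y + (1/2) * h (2 *\<^sub>R x - y)"
    using convex_onD[OF assms(1), of "1/2" y "2 *\<^sub>R x - y"] assms(3) y2 by simp
  moreover have "h (2 *\<^sub>R x - y) \<le> M" using assms(2) y2 by blast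
  ultimately show ?thesis by (simp add: field_simps)
qed

lemma convex_lipschitz_onesided:
  fixes h :: "'u::real_normed_vector \<Rightarrow> real"
  assumes r: "r > 0" and cv: "convex_on (ball x r) h" and bd: "\<forall>y\<in>ball x r. h y \<le> M"
    and y: "y \<in> ball x (r/2)" and z: "z \<in> ball x (r/2)"
  shows "h z - h y \<le> (4 * (M - h x) / r) * norm (z - y)"
proof (cases "z = y")
  case True then show ?thesis by simp
next
  case False
  define n where "n = norm (z - y)"
  have n: "n > 0" using False by (simp add: n_def)
  define w where "w = z + ((r/2) / n) *\<^sub>R (z - y)"
  define m where "m = n / (n + r/2)"
  have m01: "0 \<le> m" "m \<le> 1" using n r by (auto simp: m_def)
  have "norm (w - x) \<le> norm (z - x) + norm (((r/2) / n) *\<^sub>R (z - y))"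
    unfolding w_def by (metis add.commute add_diff_eq norm_triangle_ineq)
  also have "norm (((r/2) / n) *\<^sub>R (z - y)) = r/2"
    using n r by (simp add: n_def)
  finally have "norm (w - x) < r" using z by (simp add: dist_norm norm_minus_commute)
  then have wb: "w \<in> ball x r" by (simp add: dist_norm norm_minus_commute)
  have yb: "y \<in> ball x r" "z \<in> ball x r" using y z by (auto simp: mem_ball) (smt (verit) zero_le_dist)+
  have mm: "m * ((r/2) / n) = 1 - m" using n r by (simp add: m_def field_simps)
  have "(1 - m) *\<^sub>R y + m *\<^sub>R w = z"
  proof -
    have "(1 - m) *\<^sub>R y + m *\<^sub>R w = (1 - m) *\<^sub>R y + m *\<^sub>R z + (m * ((r/2) / n)) *\<^sub>R (z - y)"
      by (simp add: w_def algebra_simps)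
    also have "\<dots> = z" unfolding mm by (simp add: algebra_simps)
    finally show ?thesis .
  qed
  then have "h z \<le> (1 - m) * h y + m * h w"
    using convex_onD[OF cv m01 yb(1) wb] by simp
  then have "h z - h y \<le> m * (h w - h y)" by (simp add: algebra_simps)
  also have "\<dots> \<le> m * (2 * (M - h x))"
  proof (rule mult_left_mono)
    have "h w \<le> M" using bd wb by blast
    then show "h w - h y \<le> 2 * (M - h x)" using convex_half_lower[OF cv bd yb(1)] by (simp add: algebra_simps)
  qed (use m01 in auto)
  also have "\<dots> \<le> (2 * n / r) * (2 * (M - h x))"
  proof (rule mult_right_mono)
    show "m \<le> 2 * n / r" using n r by (simp add: m_def field_simps)
    show "0 \<le> 2 * (M - h x)" using bd r by auto
  qed
  also have "(2 * n / r) * (2 * (M - h x)) = (4 * (M - h x) / r) * norm (z - y)"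
    by (simp add: n_def field_simps)
  finally show ?thesis .
qed

lemma convex_lipschitz_ball:
  fixes h :: "'u::real_normed_vector \<Rightarrow> real"
  assumes r: "r > 0" and cv: "convex_on (ball x r) h" and bd: "\<forall>y\<in>ball x r. h y \<le> M"
  shows "(4 * (M - h x) / r)-lipschitz_on (ball x (r/2)) h"
proof (rule lipschitz_onI)
  fix y z assume y: "y \<in> ball x (r/2)" and z: "z \<in> ball x (r/2)"
  have "h z - h y \<le> (4 * (M - h x) / r) * norm (z - y)"
    by (rule convex_lipschitz_onesided[OF r cv bd y z])
  moreover have "h y - h z \<le> (4 * (M - h x) / r) * norm (y - z)"
    by (rule convex_lipschitz_onesided[OF r cv bd z y])
  ultimately show "dist (h y) (h z) \<le> (4 * (M - h x) / r) * dist y z"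
    by (simp add: dist_norm norm_minus_commute abs_le_iff)
next
  show "0 \<le> 4 * (M - h x) / r" using bd r by auto
qed


lemma mvt_between:
  fixes \<phi> \<phi>' :: "real \<Rightarrow> real"
  assumes "\<And>s. min a b \<le> s \<Longrightarrow> s \<le> max a b \<Longrightarrow> (\<phi> has_real_derivative \<phi>' s) (at s)"
  shows "\<exists>\<xi>. min a b \<le> \<xi> \<and> \<xi> \<le> max a b \<and> \<phi> b - \<phi> a = (b - a) * \<phi>' \<xi>"
proof (cases a b rule: linorder_cases)
  case less
  then obtain z where "a < z" "z < b" "\<phi> b - \<phi> a = (b - a) * \<phi>' z"
    using MVT2[of a b \<phi> \<phi>'] assms by auto
  then show ?thesis using less by (intro exI[of _ z]) auto
next
  case equal then show ?thesis by (intro exI[of _ a]) auto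
next
  case greater
  then obtain z where "b < z" "z < a" "\<phi> a - \<phi> b = (a - b) * \<phi>' z"
    using MVT2[of b a \<phi> \<phi>'] assms by auto
  then show ?thesis using greater by (intro exI[of _ z]) (auto simp: algebra_simps)
qed

lemma convex_slope_mono:
  fixes h :: "'u::real_normed_vector \<Rightarrow> real"
  assumes cv: "convex_on S h" and y: "y \<in> S" and yb: "y + b *\<^sub>R d \<in> S" and a: "0 < a" "a \<le> b"
  shows "(h (y + a *\<^sub>R d) - h y) / a \<le> (h (y + b *\<^sub>R d) - h y) / b"
proof -
  have b: "b > 0" using a by simp
  have "y + a *\<^sub>R d = (1 - a/b) *\<^sub>R y + (a/b) *\<^sub>R (y + b *\<^sub>R d)"
    using b by (simp add: algebra_simps)
  then have "h (y + a *\<^sub>R d) \<le> (1 - a/b) * h y + (a/b) * h (y + b *\<^sub>R d)"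
    using convex_onD[OF cv, of "a/b" y "y + b *\<^sub>R d"] a b y yb by simp
  then have "h (y + a *\<^sub>R d) - h y \<le> (a/b) * (h (y + b *\<^sub>R d) - h y)"
    by (simp add: algebra_simps)
  then show ?thesis using a b by (simp add: field_simps)
qed


lemma regular_comp:
  fixes h E :: "'u::real_normed_vector \<Rightarrow> real" and \<phi> \<phi>' :: "real \<Rightarrow> real"
  assumes dpos: "\<delta> > 0"
    and cv: "convex_on (ball x \<delta>) h"
    and lip: "L-lipschitz_on (ball x \<delta>) h"
    and I: "open I" "h x \<in> I"
    and der: "\<And>s. s \<in> I \<Longrightarrow> (\<phi> has_real_derivative \<phi>' s) (at s)"
    and cont: "isCont \<phi>' (h x)"
    and nonneg: "\<phi>' (h x) \<ge> 0"
    and eq: "\<And>y. y \<in> ball x \<delta> \<Longrightarrow> E y = \<phi> (h y)"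
  shows "clarke_regular_at E x"
proof -
  define c where "c = \<phi>' (h x)"
  have L0: "L \<ge> 0" using lip by (rule lipschitz_on_nonneg)
  have xb: "x \<in> ball x \<delta>" using dpos by simp
  have hlip: "\<bar>h z - h y\<bar> \<le> L * norm (z - y)" if "y \<in> ball x \<delta>" "z \<in> ball x \<delta>" for y z
    using lipschitz_onD[OF lip that(2) that(1)] by (simp add: dist_norm)
  have contE: "\<exists>d>0. \<forall>s. \<bar>s - h x\<bar> < d \<longrightarrow> \<bar>\<phi>' s - c\<bar> < e" if "e > 0" for e
    using cont that unfolding continuous_at_eps_delta dist_real_def c_def by blast
  obtain \<eta>0 where \<eta>0: "\<eta>0 > 0" "ball (h x) \<eta>0 \<subseteq> I"
    using I open_contains_ball by blast
  have derb: "(\<phi> has_real_derivative \<phi>' s) (at s)" if "\<bar>s - h x\<bar> < \<eta>0" for s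
    using der \<eta>0 that by (auto simp: dist_real_def subset_eq)
  have mvt: "\<exists>\<xi>. \<bar>\<xi> - h x\<bar> \<le> max \<bar>a - h x\<bar> \<bar>b - h x\<bar> \<and> \<phi> b - \<phi> a = (b - a) * \<phi>' \<xi>"
    if "\<bar>a - h x\<bar> < \<eta>0" "\<bar>b - h x\<bar> < \<eta>0" for a b
  proof -
    have "\<exists>\<xi>. min a b \<le> \<xi> \<and> \<xi> \<le> max a b \<and> \<phi> b - \<phi> a = (b - a) * \<phi>' \<xi>"
      by (rule mvt_between) (use that in \<open>intro derb; auto\<close>)
    then obtain \<xi> where "min a b \<le> \<xi>" "\<xi> \<le> max a b" "\<phi> b - \<phi> a = (b - a) * \<phi>' \<xi>" by blast
    then show ?thesis by (intro exI[of _ \<xi>]) auto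
  qed
  obtain d1 where d1: "d1 > 0" "\<forall>s. \<bar>s - h x\<bar> < d1 \<longrightarrow> \<bar>\<phi>' s - c\<bar> < 1"
    using contE[of 1] by auto
  define \<eta> where "\<eta> = min d1 \<eta>0"
  have \<eta>: "\<eta> > 0" "\<eta> \<le> \<eta>0" "\<forall>s. \<bar>s - h x\<bar> < \<eta> \<longrightarrow> \<bar>\<phi>' s - c\<bar> < 1"
    using d1 \<eta>0 by (auto simp: \<eta>_def)
  define \<delta>1 where "\<delta>1 = min \<delta> (\<eta> / (L + 1))"
  have \<delta>1: "\<delta>1 > 0" "\<delta>1 \<le> \<delta>" using dpos \<eta> L0 by (auto simp: \<delta>1_def)
  have hnear: "\<bar>h y - h x\<bar> < \<eta>" if "y \<in> ball x \<delta>1" for y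
  proof -
    have "\<bar>h y - h x\<bar> \<le> L * norm (y - x)" using hlip[OF xb] that \<delta>1 by auto
    also have "\<dots> \<le> L * \<delta>1" using that L0 by (intro mult_left_mono) (auto simp: dist_norm norm_minus_commute)
    also have "\<dots> \<le> L * (\<eta> / (L + 1))"
      using L0 by (intro mult_left_mono) (auto simp: \<delta>1_def)
    also have "\<dots> < \<eta>"
      using L0 \<eta> by (simp add: field_simps)
    finally show ?thesis .
  qed
  have "\<exists>e>0. \<exists>L. L-lipschitz_on (ball x e) E"
  proof (intro exI conjI)
    show "\<delta>1 > 0" by (rule \<delta>1)
    show "(L * (\<bar>c\<bar> + 1))-lipschitz_on (ball x \<delta>1) E"
    proof (rule lipschitz_onI)
      fix y z assume y: "y \<in> ball x \<delta>1" and z: "z \<in> ball x \<delta>1"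
      have yb: "y \<in> ball x \<delta>" and zb: "z \<in> ball x \<delta>" using y z \<delta>1 by auto
      obtain \<xi> where \<xi>: "\<bar>\<xi> - h x\<bar> \<le> max \<bar>h z - h x\<bar> \<bar>h y - h x\<bar>" "\<phi> (h y) - \<phi> (h z) = (h y - h z) * \<phi>' \<xi>"
        using mvt[of "h z" "h y"] hnear[OF y] hnear[OF z] \<eta> by auto
      have "\<bar>\<xi> - h x\<bar> < \<eta>" using \<xi>(1) hnear[OF y] hnear[OF z] by linarith
      then have "\<bar>\<phi>' \<xi> - c\<bar> < 1" using \<eta>(3) by blast
      then have "\<bar>\<phi>' \<xi>\<bar> \<le> \<bar>c\<bar> + 1" by arith
      have "dist (E y) (E z) = \<bar>h y - h z\<bar> * \<bar>\<phi>' \<xi>\<bar>"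
        using eq[OF yb] eq[OF zb] \<xi>(2) by (simp add: dist_real_def abs_mult)
      also have "\<dots> \<le> (L * norm (y - z)) * (\<bar>c\<bar> + 1)"
        using hlip[OF zb yb] \<open>\<bar>\<phi>' \<xi>\<bar> \<le> \<bar>c\<bar> + 1\<close> by (intro mult_mono) auto
      finally show "dist (E y) (E z) \<le> L * (\<bar>c\<bar> + 1) * dist y z" by (simp add: dist_norm mult_ac)
    qed (use L0 in auto)
  qed
  then have locl: "locally_lipschitz_on {x} E"
    unfolding locally_lipschitz_on_def by simp
  have main: "\<exists>D. has_dir_deriv E x d D \<and> clarke_dir_deriv E x d = ereal D" for d
  proof -
    define s0 where "s0 = \<delta> / (norm d + 1)"
    have np: "norm d + 1 > 0" "1 + norm d > 0" using norm_ge_zero[of d] by linarith+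
    have s0: "s0 > 0" using dpos norm_ge_zero[of d] unfolding s0_def by (intro divide_pos_pos) linarith+
    have inball: "y + t *\<^sub>R d \<in> ball x \<delta>" if "norm (y - x) + t * norm d < \<delta>" "t \<ge> 0" for y t
    proof -
      have "norm (y + t *\<^sub>R d - x) \<le> norm (y - x) + norm (t *\<^sub>R d)"
        by (metis add_diff_eq diff_add_eq norm_triangle_ineq)
      then show ?thesis using that by (simp add: dist_norm norm_minus_commute)
    qed
    have s0d: "t * norm d < \<delta>" if "0 \<le> t" "t < s0" for t
    proof -
      have "t * norm d \<le> s0 * norm d" using that by (intro mult_right_mono) auto
      also have "\<dots> < \<delta>" using dpos np by (simp add: s0_def field_simps)
      finally show ?thesis .
    qed
    define q where "q t = (h (x + t *\<^sub>R d) - h x) / t" for t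
    have xtd: "x + t *\<^sub>R d \<in> ball x \<delta>" if "0 \<le> t" "t < s0" for t
      using inball[of x t] s0d[OF that] that by simp
    have qmono: "q a \<le> q b" if "a \<in> {0<..<s0}" "b \<in> {0<..<s0}" "0 < a" "a \<le> b" for a b
      unfolding q_def by (rule convex_slope_mono[OF cv xb xtd]) (use that in auto)
    have qbnd: "- (L * norm d) \<le> q a" if "a \<in> {0<..<s0}" "0 < a" for a
    proof -
      have "\<bar>h (x + a *\<^sub>R d) - h x\<bar> \<le> L * norm (a *\<^sub>R d)"
        using hlip[OF xb xtd[of a]] that by auto
      then have "\<bar>h (x + a *\<^sub>R d) - h x\<bar> \<le> a * (L * norm d)" using that by (simp add: mult_ac)
      then show ?thesis using that by (simp add: q_def field_simps abs_le_iff)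
    qed
    define Dh where "Dh = Inf (q ` ({0<..} \<inter> {0<..<s0}))"
    have "(q \<longlongrightarrow> Dh) (at 0 within ({0<..} \<inter> {0<..<s0}))"
      unfolding Dh_def by (rule Lim_right_bound[where K = "- (L * norm d)"]) (use qmono qbnd in auto)
    moreover have "at (0::real) within ({0<..} \<inter> {0<..<s0}) = at_right 0"
      by (rule at_within_nhd[of _ "{-s0<..<s0}"]) (use s0 in auto)
    ultimately have qlim: "(q \<longlongrightarrow> Dh) (at_right 0)" by simp
    have "DERIV \<phi> (h x) :> c" using derb[of "h x"] \<eta>0 by (simp add: c_def)
    then obtain G where G: "\<forall>z. \<phi> z - \<phi> (h x) = G z * (z - h x)" "isCont G (h x)" "G (h x) = c"
      unfolding CARAT_DERIV by blast
    have hcontx: "isCont h x"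
      using continuous_on_eq_continuous_at[of "ball x \<delta>" h] lipschitz_on_continuous_on[OF lip] xb by auto
    have "((\<lambda>t. x + t *\<^sub>R d) \<longlongrightarrow> x + 0 *\<^sub>R d) (at_right (0::real))"
      by (intro tendsto_intros)
    then have "((\<lambda>t. x + t *\<^sub>R d) \<longlongrightarrow> x) (at_right (0::real))" by simp
    then have "((\<lambda>t. h (x + t *\<^sub>R d)) \<longlongrightarrow> h x) (at_right (0::real))"
      by (rule isCont_tendsto_compose[OF hcontx])
    then have "((\<lambda>t. G (h (x + t *\<^sub>R d))) \<longlongrightarrow> G (h x)) (at_right (0::real))"
      by (rule isCont_tendsto_compose[OF G(2)])
    then have "((\<lambda>t. G (h (x + t *\<^sub>R d)) * q t) \<longlongrightarrow> c * Dh) (at_right (0::real))"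
      using qlim G(3) by (auto intro: tendsto_mult)
    moreover have "eventually (\<lambda>t. G (h (x + t *\<^sub>R d)) * q t = (E (x + t *\<^sub>R d) - E x) / t) (at_right (0::real))"
      unfolding eventually_at_right_field
    proof (intro exI[of _ s0] conjI allI impI)
      fix t :: real assume t: "0 < t" "t < s0"
      show "G (h (x + t *\<^sub>R d)) * q t = (E (x + t *\<^sub>R d) - E x) / t"
        using eq[OF xtd[of t]] eq[OF xb] t G(1) by (simp add: q_def)
    qed (use s0 in auto)
    ultimately have dd: "has_dir_deriv E x d (c * Dh)"
      unfolding has_dir_deriv_def by (rule Lim_transform_eventually)
    have low: "ereal (c * Dh) \<le> clarke_dir_deriv E x d"
      unfolding clarke_dir_deriv_def
      using dd[unfolded has_dir_deriv_def]
      by (rule clarke_lower[where Q = "\<lambda>y t. (E (y + t *\<^sub>R d) - E y) / t"])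
    have up: "clarke_dir_deriv E x d \<le> ereal (c * Dh)"
      unfolding clarke_dir_deriv_def
    proof (rule clarke_upper[where Q = "\<lambda>y t. (E (y + t *\<^sub>R d) - E y) / t"])
      fix e :: real assume e: "e > 0"
      show "\<exists>r>0. \<forall>y t. norm (y - x) < r \<longrightarrow> 0 < t \<longrightarrow> t < r \<longrightarrow> (E (y + t *\<^sub>R d) - E y) / t \<le> c * Dh + e"
      proof -
        define K where "K = L * norm d"
        have K0: "K \<ge> 0" using L0 by (simp add: K_def)
        define e1 where "e1 = e / (4 * (c + 1))"
        have c0: "c \<ge> 0" using nonneg by (simp add: c_def)
        have e1: "e1 > 0" using e c0 by (simp add: e1_def)
        have "eventually (\<lambda>t. q t < Dh + e1) (at_right 0)"
          using qlim e1 by (intro order_tendstoD(2)) auto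
        then obtain b where b: "b > 0" "\<forall>t>0. t < b \<longrightarrow> q t < Dh + e1"
          unfolding eventually_at_right_field by auto
        define s where "s = min b (s0/2) / 2"
        have s12: "0 < s" "s < s0/2" "s < b"
          using b s0 by (auto simp: s_def)
        have s: "0 < s" "s < s0/2" "q s \<le> Dh + e1"
          using s12 b(2) by auto
        obtain d2 where d2: "d2 > 0" "\<forall>\<xi>. \<bar>\<xi> - h x\<bar> < d2 \<longrightarrow> \<bar>\<phi>' \<xi> - c\<bar> < e / (2 * (K + 1))"
          using contE[of "e / (2 * (K + 1))"] e K0 by auto
        define \<eta>2 where "\<eta>2 = min d2 \<eta>"
        have \<eta>2: "\<eta>2 > 0" "\<eta>2 \<le> \<eta>" "\<forall>\<xi>. \<bar>\<xi> - h x\<bar> < \<eta>2 \<longrightarrow> \<bar>\<phi>' \<xi> - c\<bar> < e / (2 * (K + 1))"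
          using d2 \<eta> by (auto simp: \<eta>2_def)
        define r where "r = min (min (\<delta>/2) s) (min (\<eta>2 / (L * (1 + norm d) + 1)) (e1 * s / (2 * L + 1)))"
        have "L * (1 + norm d) \<ge> 0" using L0 np by simp
        then have LL: "L * (1 + norm d) + 1 > 0" "2 * L + 1 > 0" using L0 by linarith+
        have r0: "r > 0"
          using dpos s \<eta>2 e1 LL by (auto simp: r_def intro!: divide_pos_pos mult_pos_pos)
        have r: "r > 0" "r \<le> \<delta>/2" "r \<le> s" "r \<le> \<eta>2 / (L * (1 + norm d) + 1)" "r \<le> e1 * s / (2 * L + 1)"
        proof -
          have "r \<le> min (\<delta>/2) s" "r \<le> min (\<eta>2 / (L * (1 + norm d) + 1)) (e1 * s / (2 * L + 1))"
            unfolding r_def by (rule min.cobounded1, rule min.cobounded2)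
          then show "r > 0" "r \<le> \<delta>/2" "r \<le> s" "r \<le> \<eta>2 / (L * (1 + norm d) + 1)" "r \<le> e1 * s / (2 * L + 1)"
            using r0 by (auto simp del: min_less_iff_conj)
        qed
        have s0d': "s0 * norm d \<le> \<delta>" using dpos np by (simp add: s0_def field_simps)
        have sd: "s * norm d \<le> \<delta>/2"
        proof -
          have "s * norm d \<le> (s0/2) * norm d" using s by (intro mult_right_mono) auto
          then show ?thesis using s0d' by linarith
        qed
        show ?thesis
        proof (intro exI[of _ r] conjI allI impI)
          show "r > 0" by (rule r)
          fix y t assume y: "norm (y - x) < r" and t: "0 < t" "t < r"
          have ts: "t \<le> s" using t r by linarith
          have td: "t * norm d \<le> \<delta>/2"
          proof -
            have "t * norm d \<le> s * norm d" using ts by (intro mult_right_mono) auto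
            then show ?thesis using sd by linarith
          qed
          have yb: "y \<in> ball x \<delta>" using inball[of y 0] y r by simp
          have ytd: "y + t *\<^sub>R d \<in> ball x \<delta>" using inball[of y t] y r td t by simp
          have ysd: "y + s *\<^sub>R d \<in> ball x \<delta>" using inball[of y s] y r sd s by simp
          have xsd: "x + s *\<^sub>R d \<in> ball x \<delta>" using xtd[of s] s by simp
          define qy where "qy = (h (y + t *\<^sub>R d) - h y) / t"
          have "qy \<le> (h (y + s *\<^sub>R d) - h y) / s"
            unfolding qy_def by (rule convex_slope_mono[OF cv yb ysd t(1) ts])
          also have "\<dots> \<le> q s + e1"
          proof -
            have "\<bar>h (y + s *\<^sub>R d) - h (x + s *\<^sub>R d)\<bar> \<le> L * norm (y - x)"
              using hlip[OF xsd ysd] by simp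
            moreover have "\<bar>h y - h x\<bar> \<le> L * norm (y - x)"
              using hlip[OF xb yb] by simp
            moreover have "L * norm (y - x) \<le> L * r" using y L0 by (intro mult_left_mono) auto
            moreover have "2 * L * r \<le> e1 * s"
            proof -
              have "2 * L * r \<le> (2 * L + 1) * r" using r by simp
              also have "\<dots> \<le> (2 * L + 1) * (e1 * s / (2 * L + 1))"
                using r LL by (intro mult_left_mono) auto
              also have "\<dots> = e1 * s" using LL by simp
              finally show ?thesis .
            qed
            ultimately have "h (y + s *\<^sub>R d) - h y \<le> (h (x + s *\<^sub>R d) - h x) + e1 * s"
              by linarith
            then have "(h (y + s *\<^sub>R d) - h y) / s \<le> ((h (x + s *\<^sub>R d) - h x) + e1 * s) / s"
              using s by (intro divide_right_mono) auto
            also have "\<dots> = q s + e1" using s by (simp add: q_def field_simps)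
            finally show ?thesis .
          qed
          also have "\<dots> \<le> Dh + 2 * e1" using s by linarith
          finally have qyup: "qy \<le> Dh + 2 * e1" .
          have qyabs: "\<bar>qy\<bar> \<le> K"
          proof -
            have "\<bar>h (y + t *\<^sub>R d) - h y\<bar> \<le> L * norm (t *\<^sub>R d)"
              using hlip[OF yb ytd] by simp
            also have "\<dots> = t * K" using t by (simp add: K_def mult_ac)
            finally show ?thesis using t by (simp add: qy_def abs_divide divide_le_eq mult_ac)
          qed
          have hy: "\<bar>h y - h x\<bar> < \<eta>2"
          proof -
            have "\<bar>h y - h x\<bar> \<le> L * norm (y - x)" using hlip[OF xb yb] by simp
            also have "\<dots> \<le> L * r" using y L0 by (intro mult_left_mono) auto
            also have "\<dots> \<le> (L * (1 + norm d)) * r" using L0 r by (intro mult_right_mono) (auto simp: algebra_simps)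
            also have "\<dots> < (L * (1 + norm d) + 1) * r" using r by simp
            also have "\<dots> \<le> (L * (1 + norm d) + 1) * (\<eta>2 / (L * (1 + norm d) + 1))"
              using r LL by (intro mult_left_mono) auto
            also have "\<dots> = \<eta>2" using LL by simp
            finally show ?thesis .
          qed
          have hytd: "\<bar>h (y + t *\<^sub>R d) - h x\<bar> < \<eta>2"
          proof -
            have "\<bar>h (y + t *\<^sub>R d) - h x\<bar> \<le> L * norm (y + t *\<^sub>R d - x)" using hlip[OF xb ytd] by simp
            also have "norm (y + t *\<^sub>R d - x) \<le> norm (y - x) + t * norm d"
              using norm_triangle_ineq[of "y - x" "t *\<^sub>R d"] t by (simp add: algebra_simps)
            then have "L * norm (y + t *\<^sub>R d - x) \<le> L * (r + r * norm d)"
            proof -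
              have "t * norm d \<le> r * norm d" using t by (intro mult_right_mono) auto
              then have "norm (y + t *\<^sub>R d - x) \<le> r + r * norm d"
                using \<open>norm (y + t *\<^sub>R d - x) \<le> norm (y - x) + t * norm d\<close> y by linarith
              then show ?thesis using L0 by (intro mult_left_mono) auto
            qed
            also have "L * (r + r * norm d) = (L * (1 + norm d)) * r" by (simp add: algebra_simps)
            also have "\<dots> < (L * (1 + norm d) + 1) * r" using r by simp
            also have "\<dots> \<le> (L * (1 + norm d) + 1) * (\<eta>2 / (L * (1 + norm d) + 1))"
              using r LL by (intro mult_left_mono) auto
            also have "\<dots> = \<eta>2" using LL by simp
            finally show ?thesis .
          qed
          obtain \<xi> where \<xi>: "\<bar>\<xi> - h x\<bar> \<le> max \<bar>h y - h x\<bar> \<bar>h (y + t *\<^sub>R d) - h x\<bar>"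
              "\<phi> (h (y + t *\<^sub>R d)) - \<phi> (h y) = (h (y + t *\<^sub>R d) - h y) * \<phi>' \<xi>"
            using mvt[of "h y" "h (y + t *\<^sub>R d)"] hy hytd \<eta>2 \<eta> by auto
          have "\<bar>\<xi> - h x\<bar> < \<eta>2" using \<xi>(1) hy hytd by linarith
          then have \<xi>c: "\<bar>\<phi>' \<xi> - c\<bar> < e / (2 * (K + 1))" using \<eta>2(3) by blast
          have Qeq: "(E (y + t *\<^sub>R d) - E y) / t = c * qy + (\<phi>' \<xi> - c) * qy"
          proof -
            have "(E (y + t *\<^sub>R d) - E y) / t = ((h (y + t *\<^sub>R d) - h y) * \<phi>' \<xi>) / t"
              using eq[OF ytd] eq[OF yb] \<xi>(2) by simp
            also have "\<dots> = qy * \<phi>' \<xi>" by (simp add: qy_def)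
            also have "\<dots> = c * qy + (\<phi>' \<xi> - c) * qy" by (simp add: algebra_simps)
            finally show ?thesis .
          qed
          have A: "c * qy \<le> c * (Dh + 2 * e1)" using c0 qyup by (intro mult_left_mono)
          have B: "(\<phi>' \<xi> - c) * qy \<le> e / 2"
          proof -
            have "(\<phi>' \<xi> - c) * qy \<le> \<bar>\<phi>' \<xi> - c\<bar> * \<bar>qy\<bar>" by (simp add: abs_mult[symmetric])
            also have "\<dots> \<le> (e / (2 * (K + 1))) * K"
              using \<xi>c qyabs by (intro mult_mono) auto
            also have "\<dots> \<le> e / 2" using e K0 by (simp add: field_simps)
            finally show ?thesis .
          qed
          have C: "c * (2 * e1) \<le> e / 2" using e c0 by (simp add: e1_def field_simps)
          show "(E (y + t *\<^sub>R d) - E y) / t \<le> c * Dh + e"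
            using Qeq A B C by (simp add: algebra_simps)
        qed
      qed
    qed
    show ?thesis using dd low up by (intro exI[of _ "c * Dh"]) auto
  qed
  show ?thesis unfolding clarke_regular_at_def using locl main by blast
qed

lemma chi_const_pos: "k \<ge> 1 \<Longrightarrow> 2 powr (real k / 2 - 1) * Gamma (real k / 2) > 0"
  by (intro mult_pos_pos Gamma_real_pos) auto

lemma chi_density_nonneg: "k \<ge> 1 \<Longrightarrow> 0 \<le> chi_density k r"
  using chi_const_pos[of k] by (auto simp: chi_density_def intro!: divide_nonneg_pos)

lemma chi_density_formula_cont:
  assumes k: "k \<ge> 1" shows "continuous_on UNIV (\<lambda>r. r ^ (k - 1) * exp (- (r\<^sup>2) / 2) / (2 powr (real k / 2 - 1) * Gamma (real k / 2)))"
  by (intro continuous_intros) (use chi_const_pos[OF k] in auto)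

lemma chi_density_cont_Icc: "k \<ge> 1 \<Longrightarrow> continuous_on {0..b} (chi_density k)"
proof -
  assume k: "k \<ge> 1"
  have "continuous_on {0..b} (\<lambda>r. r ^ (k - 1) * exp (- (r\<^sup>2) / 2) / (2 powr (real k / 2 - 1) * Gamma (real k / 2)))"
    using chi_density_formula_cont[OF k] continuous_on_subset by blast
  then show ?thesis by (rule continuous_on_cong[THEN iffD1, rotated 2]) (auto simp: chi_density_def)
qed

lemma chi_density_isCont: "k \<ge> 1 \<Longrightarrow> r > 0 \<Longrightarrow> isCont (chi_density k) r"
proof -
  assume k: "k \<ge> 1" and r: "r > 0"
  have "continuous_on {0<..} (chi_density k)"
  proof -
    have "continuous_on {0<..} (\<lambda>r. r ^ (k - 1) * exp (- (r\<^sup>2) / 2) / (2 powr (real k / 2 - 1) * Gamma (real k / 2)))"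
      using chi_density_formula_cont[OF k] continuous_on_subset by blast
    then show ?thesis by (rule continuous_on_cong[THEN iffD1, rotated 2]) (auto simp: chi_density_def)
  qed
  then show ?thesis using r by (metis continuous_on_eq_continuous_at open_greaterThan greaterThan_iff)
qed

lemma chi_density_measurable[measurable]: "chi_density k \<in> borel_measurable borel"
  unfolding chi_density_def by measurable

lemma chi_measure_Icc:
  assumes k: "k \<ge> 1" and b: "b \<ge> 0"
  shows "measure (chi_distribution k) {0..b} = integral {0..b} (chi_density k)"
proof -
  have int: "(chi_density k has_integral integral {0..b} (chi_density k)) {0..b}"
    using integrable_continuous_interval[OF chi_density_cont_Icc[OF k]] by (simp add: has_integral_integral)
  have "emeasure (chi_distribution k) {0..b} = (\<integral>\<^sup>+ x. ennreal (chi_density k x) * indicator {0..b} x \<partial>lborel)"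
    unfolding chi_distribution_def by (rule emeasure_density) auto
  also have "\<dots> = ennreal (integral {0..b} (chi_density k))"
    by (rule nn_integral_has_integral_lebesgue'[OF _ int]) (use chi_density_nonneg[OF k] in auto)
  moreover have "0 \<le> integral {0..b} (chi_density k)"
    by (rule integral_nonneg) (use int chi_density_nonneg[OF k] in auto)
  ultimately show ?thesis
    unfolding measure_def by simp
qed

lemma chi_cdf_deriv:
  assumes k: "k \<ge> 1" and b: "b > 0"
  shows "((\<lambda>x. integral {0..x} (chi_density k)) has_real_derivative chi_density k b) (at b)"
proof -
  have "((\<lambda>x. integral {0..x} (chi_density k)) has_real_derivative chi_density k b) (at b within {0..b+1})"
    by (rule integral_has_real_derivative[OF chi_density_cont_Icc[OF k]]) (use b in auto)
  moreover have "at b within {0..b+1} = at b"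
    by (rule at_within_interior) (use b in auto)
  ultimately show ?thesis by simp
qed


theorem lemma2p2:
  fixes g :: "'u::banach \<Rightarrow> real^'m \<Rightarrow> real"
    and Sigma R :: "real^'m^'m"
    and ubar :: 'u
    and N :: "'u set"
  assumes "reflexive_space TYPE('u)"
    and "separable_type TYPE('u)"
    and "covariance_matrix Sigma"
    and "R ** transpose R = Sigma"
    and "locally_lipschitz_on UNIV (\<lambda>(u, z). g u z)"
    and "convex_on UNIV (\<lambda>(u, z). g u z)"
    and "g ubar 0 < 0"
    and "bounded {z. g ubar z \<le> 0}"
    and "open N" and "ubar \<in> N"
    and "\<forall>u\<in>N. g u 0 < 0"
  shows "\<forall>v\<in>sphere 0 1. clarke_regular_on N (\<lambda>u. - radial_prob g R u v)"
proof -
  define G where "G = (\<lambda>(u, z). g u z)"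
  have k: "CARD('m) \<ge> 1" by (simp add: Suc_le_eq)
  have Gcont: "isCont G p" for p
  proof -
    obtain e L where e: "e > 0" "L-lipschitz_on (ball p e) G"
      using assms(5) unfolding locally_lipschitz_on_def G_def by blast
    have "continuous_on (ball p e) G" by (rule lipschitz_on_continuous_on[OF e(2)])
    then show ?thesis using e(1) continuous_on_eq_continuous_at[of "ball p e" G] by simp
  qed
  have GcontUNIV: "continuous_on UNIV G" by (rule continuous_at_imp_continuous_on) (use Gcont in auto)
  have gcont_r: "continuous_on UNIV (\<lambda>r::real. g u (r *\<^sub>R w))" for u w
  proof -
    have "continuous_on UNIV (\<lambda>r::real. G (u, r *\<^sub>R w))"
      by (rule continuous_on_compose2[OF GcontUNIV]) (auto intro!: continuous_intros)
    then show ?thesis by (simp add: G_def)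
  qed
  have gcont_u: "continuous_on UNIV (\<lambda>u. g u z)" for z
  proof -
    have "continuous_on UNIV (\<lambda>u. G (u, z))"
      by (rule continuous_on_compose2[OF GcontUNIV]) (auto intro!: continuous_intros)
    then show ?thesis by (simp add: G_def)
  qed
  have gconv: "g ((1 - t) *\<^sub>R u1 + t *\<^sub>R u2) ((1 - t) *\<^sub>R z1 + t *\<^sub>R z2) \<le> (1 - t) * g u1 z1 + t * g u2 z2"
    if "0 \<le> t" "t \<le> 1" for t u1 u2 z1 z2
    using convex_onD[OF assms(6), of t "(u1, z1)" "(u2, z2)"] that by simp
  show ?thesis
  proof (intro ballI, unfold clarke_regular_on_def, intro ballI)
    fix v :: "real^'m" and x assume v: "v \<in> sphere 0 1" and x: "x \<in> N"
    define w where "w = R *v v"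
    define E where "E = (\<lambda>u. - radial_prob g R u v)"
    obtain \<delta> where \<delta>: "\<delta> > 0" "ball x \<delta> \<subseteq> N" using assms(9) x open_contains_ball by blast
    show "clarke_regular_at (\<lambda>u. - radial_prob g R u v) x"
    proof (cases "w = 0")
      case True
      have Ey: "E y = E x" if "y \<in> ball x \<delta>" for y
      proof -
        have "y \<in> N" using that \<delta> by auto
        then have "{r. r \<ge> 0 \<and> g y (r *\<^sub>R (R *v v)) \<le> 0} = {r. r \<ge> 0}"
          using assms(11) True by (auto simp: w_def)
        moreover have "{r. r \<ge> 0 \<and> g x (r *\<^sub>R (R *v v)) \<le> 0} = {r. r \<ge> 0}"
          using assms(11) x True by (auto simp: w_def)
        ultimately show ?thesis by (simp add: E_def radial_prob_def)
      qed
      have "clarke_regular_at E x"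
      proof (rule regular_comp[of \<delta> x "\<lambda>_. 0" 0 UNIV "\<lambda>_. E x" "\<lambda>_. 0"])
        show "convex_on (ball x \<delta>) (\<lambda>_. 0)" by (simp add: convex_on_const)
        show "0-lipschitz_on (ball x \<delta>) (\<lambda>_. 0::real)" by (rule lipschitz_on_constant)
        show "\<And>y. y \<in> ball x \<delta> \<Longrightarrow> E y = E x" by (rule Ey)
      qed (use \<delta> in \<open>auto intro: DERIV_const\<close>)
      then show ?thesis by (simp add: E_def)
    next
      case False
      define S where "S u = {r. 0 \<le> r \<and> g u (r *\<^sub>R w) \<le> 0}" for u
      define \<rho> where "\<rho> u = Sup (S u)" for u
      obtain B where B: "\<forall>z. g ubar z \<le> 0 \<longrightarrow> norm z \<le> B"
        using assms(8) unfolding bounded_iff by auto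
      have "isCont (\<lambda>u. g u 0) ubar"
        using gcont_u[of 0] continuous_on_eq_continuous_at[of UNIV] by auto
      then obtain r0 where r0': "r0 > 0" "\<forall>u. dist u ubar < r0 \<longrightarrow> \<bar>g u 0 - g ubar 0\<bar> < - g ubar 0"
        using assms(7) unfolding continuous_at_eps_delta dist_real_def by (meson neg_0_less_iff_less)
      have r0x: "\<forall>u. dist u ubar < r0 \<longrightarrow> g u 0 < 0"
      proof (intro allI impI)
        fix u assume "dist u ubar < r0"
        then have "\<bar>g u 0 - g ubar 0\<bar> < - g ubar 0" using r0' by blast
        then show "g u 0 < 0" by arith
      qed
      note r0 = r0'(1) r0x
      have bdd: "bdd_above (S u0)" for u0
      proof -
        define a where "a = norm (ubar - u0) + 1"
        have a: "a > 0" "norm (ubar - u0) < a" using norm_ge_zero[of "ubar - u0"] unfolding a_def by linarith+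
        define l where "l = min (1/2) (r0 / (2 * a))"
        have l: "l > 0" "l \<le> 1/2" "l \<le> r0 / (2 * a)" using r0 a by (auto simp: l_def)
        define xl where "xl = (1 / (1 - l)) *\<^sub>R (ubar - l *\<^sub>R u0)"
        have xl1: "(1 - l) *\<^sub>R xl + l *\<^sub>R u0 = ubar" using l by (simp add: xl_def)
        have xl2: "(1 - l) *\<^sub>R xl = ubar - l *\<^sub>R u0" using l by (simp add: xl_def)
        have "(1 - l) *\<^sub>R (xl - ubar) = (1 - l) *\<^sub>R xl - (1 - l) *\<^sub>R ubar"
          by (rule scaleR_right_diff_distrib)
        also have "\<dots> = l *\<^sub>R (ubar - u0)" unfolding xl2 by (simp add: algebra_simps)
        finally have "norm ((1 - l) *\<^sub>R (xl - ubar)) = norm (l *\<^sub>R (ubar - u0))" by simp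
        then have "(1 - l) * norm (xl - ubar) = l * norm (ubar - u0)"
          using l by simp
        moreover have "l * norm (ubar - u0) < (1 - l) * r0"
        proof -
          have "l * norm (ubar - u0) < l * a" using l a by simp
          also have "\<dots> \<le> r0 / 2" using l(3) a by (simp add: field_simps)
          also have "\<dots> \<le> (1 - l) * r0"
          proof -
            have "(1/2) * r0 \<le> (1 - l) * r0" using l r0 by (intro mult_right_mono) auto
            then show ?thesis by simp
          qed
          finally show ?thesis .
        qed
        ultimately have "(1 - l) * norm (xl - ubar) < (1 - l) * r0" by simp
        then have "norm (xl - ubar) < r0" using l by (simp add: mult_less_cancel_left_pos)
        then have gxl: "g xl 0 < 0" using r0 by (simp add: dist_norm)
        show ?thesis
        proof (rule bdd_aboveI[of _ "B / (l * norm w)"])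
          fix r assume "r \<in> S u0"
          then have r: "0 \<le> r" "g u0 (r *\<^sub>R w) \<le> 0" by (auto simp: S_def)
          have "g ((1 - l) *\<^sub>R xl + l *\<^sub>R u0) ((1 - l) *\<^sub>R 0 + l *\<^sub>R (r *\<^sub>R w)) \<le> (1 - l) * g xl 0 + l * g u0 (r *\<^sub>R w)"
            by (rule gconv) (use l in auto)
          also have "\<dots> \<le> 0"
          proof -
            have "(1 - l) * g xl 0 \<le> 0" using gxl l by (intro mult_nonneg_nonpos) auto
            moreover have "l * g u0 (r *\<^sub>R w) \<le> 0" using r l by (intro mult_nonneg_nonpos) auto
            ultimately show ?thesis by linarith
          qed
          finally have "g ubar ((l * r) *\<^sub>R w) \<le> 0" using xl1 by simp
          then have "norm ((l * r) *\<^sub>R w) \<le> B" using B by blast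
          then have "(l * norm w) * r \<le> B" using l r by (simp add: mult_ac)
          then show "r \<le> B / (l * norm w)" using l False by (simp add: field_simps)
        qed
      qed
      have closedS: "closed (S u)" for u
      proof -
        have "S u = {r. 0 \<le> r} \<inter> {r. g u (r *\<^sub>R w) \<le> 0}" by (auto simp: S_def)
        moreover have "closed {r::real. 0 \<le> r}" by (simp add: closed_Collect_le)
        moreover have "closed {r. g u (r *\<^sub>R w) \<le> 0}"
          by (rule closed_Collect_le[OF gcont_r continuous_on_const])
        ultimately show ?thesis by auto
      qed
      have S0: "0 \<in> S u" if "u \<in> N" for u using assms(11) that by (auto simp: S_def)
      have \<rho>S: "\<rho> u \<in> S u" if "u \<in> N" for u
        unfolding \<rho>_def by (rule closed_contains_Sup) (use S0[OF that] bdd closedS in auto)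
      have \<rho>up: "r \<le> \<rho> u" if "r \<in> S u" for r u
        unfolding \<rho>_def by (rule cSup_upper[OF that bdd])
      have \<rho>0: "0 \<le> \<rho> u" if "u \<in> N" for u using \<rho>up[OF S0[OF that]] .
      have Seq: "S u = {0..\<rho> u}" if u: "u \<in> N" for u
      proof
        show "S u \<subseteq> {0..\<rho> u}" using \<rho>up by (auto simp: S_def)
        show "{0..\<rho> u} \<subseteq> S u"
        proof
          fix r assume r: "r \<in> {0..\<rho> u}"
          show "r \<in> S u"
          proof (cases "r = \<rho> u")
            case True then show ?thesis using \<rho>S[OF u] by simp
          next
            case False
            then have rl: "r < \<rho> u" "0 \<le> r" using r by auto
            define t where "t = r / \<rho> u"
            have t: "0 \<le> t" "t \<le> 1" using rl by (auto simp: t_def)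
            have A: "g ((1 - t) *\<^sub>R u + t *\<^sub>R u) ((1 - t) *\<^sub>R 0 + t *\<^sub>R (\<rho> u *\<^sub>R w)) \<le> (1 - t) * g u 0 + t * g u (\<rho> u *\<^sub>R w)"
              by (rule gconv[OF t])
            have e1: "(1 - t) *\<^sub>R u + t *\<^sub>R u = u" by (simp add: scaleR_collapse)
            have e2: "(1 - t) *\<^sub>R 0 + t *\<^sub>R (\<rho> u *\<^sub>R w) = r *\<^sub>R w"
              using rl by (simp add: t_def)
            have "g u (r *\<^sub>R w) \<le> (1 - t) * g u 0 + t * g u (\<rho> u *\<^sub>R w)"
              using A unfolding e1 e2 .
            moreover have "(1 - t) * g u 0 \<le> 0" using t assms(11) u by (intro mult_nonneg_nonpos) auto
            moreover have "t * g u (\<rho> u *\<^sub>R w) \<le> 0" using t \<rho>S[OF u] by (intro mult_nonneg_nonpos) (auto simp: S_def)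
            ultimately have "g u (r *\<^sub>R w) \<le> 0" by linarith
            then show ?thesis using rl by (simp add: S_def)
          qed
        qed
      qed
      define h where "h u = - \<rho> u" for u
      have hconv: "convex_on (ball x \<delta>) h"
      proof (rule convex_onI)
        fix t :: real and u1 u2 assume t: "0 < t" "t < 1" and u1: "u1 \<in> ball x \<delta>" and u2: "u2 \<in> ball x \<delta>"
        have n1: "u1 \<in> N" and n2: "u2 \<in> N" using u1 u2 \<delta> by auto
        have "g ((1 - t) *\<^sub>R u1 + t *\<^sub>R u2) ((1 - t) *\<^sub>R (\<rho> u1 *\<^sub>R w) + t *\<^sub>R (\<rho> u2 *\<^sub>R w)) \<le> (1 - t) * g u1 (\<rho> u1 *\<^sub>R w) + t * g u2 (\<rho> u2 *\<^sub>R w)"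
          by (rule gconv) (use t in auto)
        moreover have "(1 - t) * g u1 (\<rho> u1 *\<^sub>R w) \<le> 0" using t \<rho>S[OF n1] by (intro mult_nonneg_nonpos) (auto simp: S_def)
        moreover have "t * g u2 (\<rho> u2 *\<^sub>R w) \<le> 0" using t \<rho>S[OF n2] by (intro mult_nonneg_nonpos) (auto simp: S_def)
        moreover have "(1 - t) *\<^sub>R (\<rho> u1 *\<^sub>R w) + t *\<^sub>R (\<rho> u2 *\<^sub>R w) = ((1 - t) * \<rho> u1 + t * \<rho> u2) *\<^sub>R w"
          by (simp add: algebra_simps)
        ultimately have "g ((1 - t) *\<^sub>R u1 + t *\<^sub>R u2) (((1 - t) * \<rho> u1 + t * \<rho> u2) *\<^sub>R w) \<le> 0" by simp
        moreover have "0 \<le> (1 - t) * \<rho> u1 + t * \<rho> u2" using t \<rho>0[OF n1] \<rho>0[OF n2] by simp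
        ultimately have "(1 - t) * \<rho> u1 + t * \<rho> u2 \<in> S ((1 - t) *\<^sub>R u1 + t *\<^sub>R u2)" by (simp add: S_def)
        then have "(1 - t) * \<rho> u1 + t * \<rho> u2 \<le> \<rho> ((1 - t) *\<^sub>R u1 + t *\<^sub>R u2)" by (rule \<rho>up)
        then show "h ((1 - t) *\<^sub>R u1 + t *\<^sub>R u2) \<le> (1 - t) * h u1 + t * h u2" by (simp add: h_def)
      qed (rule convex_ball)
      have hle: "\<forall>y\<in>ball x \<delta>. h y \<le> 0" using \<rho>0 \<delta> by (auto simp: h_def)
      have hlip: "(4 * (0 - h x) / \<delta>)-lipschitz_on (ball x (\<delta>/2)) h"
        by (rule convex_lipschitz_ball[OF \<delta>(1) hconv hle])
      have hconv2: "convex_on (ball x (\<delta>/2)) h"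
        by (rule convex_on_subset[OF hconv]) (use \<delta> in auto)
      have \<rho>pos: "\<rho> x > 0"
      proof -
        have "isCont (\<lambda>r. g x (r *\<^sub>R w)) 0"
          using gcont_r[of x w] continuous_on_eq_continuous_at[of UNIV] by auto
        then obtain d where d: "d > 0" "\<forall>r. dist r 0 < d \<longrightarrow> \<bar>g x (r *\<^sub>R w) - g x 0\<bar> < - g x 0"
          using assms(11) x unfolding continuous_at_eps_delta dist_real_def
          by (metis neg_0_less_iff_less scale_zero_left)
        have "\<bar>g x ((d/2) *\<^sub>R w) - g x 0\<bar> < - g x 0" using d by auto
        then have "g x ((d/2) *\<^sub>R w) \<le> 0" by arith
        then have "d/2 \<in> S x" using d by (simp add: S_def)
        then have "d/2 \<le> \<rho> x" by (rule \<rho>up)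
        then show ?thesis using d by simp
      qed
      define f where "f = chi_density CARD('m)"
      define \<phi> where "\<phi> s = - integral {0..-s} f" for s
      define \<phi>' where "\<phi>' s = f (- s)" for s
      have Eeq: "E y = \<phi> (h y)" if "y \<in> ball x (\<delta>/2)" for y
      proof -
        have yN: "y \<in> N" using that \<delta> by auto
        have "radial_prob g R y v = measure (chi_distribution CARD('m)) (S y)"
          by (simp add: radial_prob_def S_def w_def)
        also have "\<dots> = integral {0..\<rho> y} f"
          unfolding Seq[OF yN] f_def by (rule chi_measure_Icc[OF k \<rho>0[OF yN]])
        finally show ?thesis by (simp add: E_def \<phi>_def h_def)
      qed
      have "clarke_regular_at E x"
      proof (rule regular_comp[OF _ hconv2 hlip, of "{..<0}" \<phi> \<phi>'])
        show "0 < \<delta>/2" using \<delta> by simp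
        show "open {..<(0::real)}" by simp
        show "h x \<in> {..<0}" using \<rho>pos by (simp add: h_def)
        show "(\<phi> has_real_derivative \<phi>' s) (at s)" if "s \<in> {..<0}" for s
        proof -
          have "((\<lambda>b. integral {0..b} f) has_real_derivative f (- s)) (at (- s))"
            unfolding f_def by (rule chi_cdf_deriv[OF k]) (use that in auto)
          from DERIV_chain2[OF this DERIV_minus[OF DERIV_ident]]
          have "((\<lambda>s. integral {0..-s} f) has_real_derivative f (- s) * - 1) (at s)" by simp
          from DERIV_minus[OF this] show ?thesis unfolding \<phi>_def[abs_def] \<phi>'_def by simp
        qed
        show "isCont \<phi>' (h x)"
          unfolding \<phi>'_def f_def
          by (rule isCont_o2[where f = uminus, OF _ chi_density_isCont[OF k]]) (use \<rho>pos in \<open>auto simp: h_def\<close>)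
        show "0 \<le> \<phi>' (h x)" unfolding \<phi>'_def f_def by (rule chi_density_nonneg[OF k])
        show "\<And>y. y \<in> ball x (\<delta>/2) \<Longrightarrow> E y = \<phi> (h y)" by (rule Eeq)
      qed
      then show ?thesis by (simp add: E_def)
    qed
  qed
qed

end
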